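(* Each of $d_{GH}$, $d^{us}_{GH}$, $d^{ls}_{GH}$, $d^{rc}_{GH}$ is a generalized pseudometric on nonempty metric spaces: for $d^{gen}_{GH}$ any one of them and any nonempty metric spaces $X,Y,Z$, we have $d^{gen}_{GH}(X,Y)\in[0,\infty]$, $d^{gen}_{GH}(X,X)=0$, $d^{gen}_{GH}(X,Y)=d^{gen}_{GH}(Y,X)$, and $d^{gen}_{GH}(X,Z)\le d^{gen}_{GH}(X,Y)+d^{gen}_{GH}(Y,Z)$.
   Context: For a metric space, $|xy|$ denotes distance. A set-valued map $f:X\rightrightarrows Y$ assigns to each $x\in X$ a nonempty $f(x)\subseteq Y$ and is identified with its graph. A correspondence between $X$ and $Y$ is a subset $R\subseteq X\times Y$ whose projections to $X$ and to $Y$ are both surjective, regarded as the set-valued map $x\mapsto R(x)=\{y:(x,y)\in R\}$; $R^{-1}=\{(y,x):(x,y)\in R\}$; $\mathcal R(X,Y)$ is the set of all correspondences. The distortion of a nonempty $\sigma\subseteq X\times Y$ is $\operatorname{dis}\sigma=\sup\{||xx'|-|yy'||:(x,y),(x',y')\in\sigma\}\in[0,\infty]$. A set-valued map $f$ between topological spaces is upper semicontinuous if for every $x$ and every open $U\supseteq f(x)$ there is a neighborhood $V$ of $x$ with $f(x')\subseteq U$ for all $x'\in V$; lower semicontinuous if for every $x$ and every open $U$ with $f(x)\cap U\ne\emptyset$ there is a neighborhood $V$ of $x$ with $f(x')\cap U\neq\emptyset$ for all $x'\in V$; continuous if both. $\mathcal R_{us}(X,Y)$ (resp. $\mathcal R_{ls}(X,Y)$,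 $\mathcal R_{rc}(X,Y)$) is the set of $R\in\mathcal R(X,Y)$ such that both $R$ and $R^{-1}$ are upper semicontinuous (resp. lower semicontinuous, continuous). Then $d_{GH}(X,Y)=\frac12\inf\{\operatorname{dis}R:R\in\mathcal R(X,Y)\}$, and $d^{us}_{GH},d^{ls}_{GH},d^{rc}_{GH}$ are defined by the same formula with $\mathcal R$ replaced by $\mathcal R_{us},\mathcal R_{ls},\mathcal R_{rc}$ respectively. *)

theory Defs
  imports "HOL-Analysis.Analysis"
begin

definition is_correspondence :: "'a metric \<Rightarrow> 'b metric \<Rightarrow> ('a \<times> 'b) set \<Rightarrow> bool" where
  "is_correspondence X Y R \<longleftrightarrow>
     R \<subseteq> mspace X \<times> mspace Y \<and> fst ` R = mspace X \<and> snd ` R = mspace Y"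

definition upper_semicont :: "'a topology \<Rightarrow> 'b topology \<Rightarrow> ('a \<times> 'b) set \<Rightarrow> bool" where
  "upper_semicont S T R \<longleftrightarrow>
     (\<forall>x\<in>topspace S. \<forall>U. openin T U \<and> R `` {x} \<subseteq> U \<longrightarrow>
        (\<exists>V. openin S V \<and> x \<in> V \<and> (\<forall>x'\<in>V. R `` {x'} \<subseteq> U)))"

definition lower_semicont :: "'a topology \<Rightarrow> 'b topology \<Rightarrow> ('a \<times> 'b) set \<Rightarrow> bool" where
  "lower_semicont S T R \<longleftrightarrow>
     (\<forall>x\<in>topspace S. \<forall>U. openin T U \<and> R `` {x} \<inter> U \<noteq> {} \<longrightarrow>
        (\<exists>V. openin S V \<and> x \<in> V \<and> (\<forall>x'\<in>V. R `` {x'} \<inter> U \<noteq> {})))"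

definition distortion :: "'a metric \<Rightarrow> 'b metric \<Rightarrow> ('a \<times> 'b) set \<Rightarrow> ereal" where
  "distortion X Y \<sigma> =
     Sup {ereal \<bar>mdist X x x' - mdist Y y y'\<bar> | x y x' y'. (x, y) \<in> \<sigma> \<and> (x', y') \<in> \<sigma>}"

datatype GH_kind = GH_all | GH_us | GH_ls | GH_rc

definition admissible :: "GH_kind \<Rightarrow> 'a metric \<Rightarrow> 'b metric \<Rightarrow> ('a \<times> 'b) set \<Rightarrow> bool" where
  "admissible k X Y R \<longleftrightarrow> is_correspondence X Y R \<and>
     (case k of
        GH_all \<Rightarrow> True
      | GH_us \<Rightarrow> upper_semicont (mtopology_of X) (mtopology_of Y) R
                 \<and> upper_semicont (mtopology_of Y) (mtopology_of X) (converse R)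
      | GH_ls \<Rightarrow> lower_semicont (mtopology_of X) (mtopology_of Y) R
                 \<and> lower_semicont (mtopology_of Y) (mtopology_of X) (converse R)
      | GH_rc \<Rightarrow> upper_semicont (mtopology_of X) (mtopology_of Y) R
                 \<and> lower_semicont (mtopology_of X) (mtopology_of Y) R
                 \<and> upper_semicont (mtopology_of Y) (mtopology_of X) (converse R)
                 \<and> lower_semicont (mtopology_of Y) (mtopology_of X) (converse R))"

definition dGH :: "GH_kind \<Rightarrow> 'a metric \<Rightarrow> 'b metric \<Rightarrow> ereal" where
  "dGH k X Y = Inf {distortion X Y R | R. admissible k X Y R} / 2"

end

theory Submission
  imports Defs
begin

lemma ereal_half_add:
  fixes a b :: ereal
  assumes "0 \<le> a" "0 \<le> b"
  shows "(a + b) / 2 = a / 2 + b / 2"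
  using assms by (cases a b rule: ereal2_cases) auto

lemma ereal_half_mono:
  fixes a b :: ereal
  assumes "a \<le> b"
  shows "a / 2 \<le> b / 2"
  using assms by (cases a b rule: ereal2_cases) auto

lemma ereal_half_nonneg:
  fixes a :: ereal
  assumes "0 \<le> a"
  shows "0 \<le> a / 2"
  using assms by (cases a) auto

lemma Inf_add_bound:
  fixes A B :: "ereal set"
  assumes A0: "\<And>a. a \<in> A \<Longrightarrow> 0 \<le> a" and B0: "\<And>b. b \<in> B \<Longrightarrow> 0 \<le> b"
    and H: "\<And>a b. a \<in> A \<Longrightarrow> b \<in> B \<Longrightarrow> c \<le> a + b"
  shows "c \<le> Inf A + Inf B"
proof -
  have IA: "0 \<le> Inf A" using A0 by (rule Inf_greatest)
  have IB: "0 \<le> Inf B" using B0 by (rule Inf_greatest)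
  show ?thesis
  proof (cases "A = {} \<or> B = {}")
    case True
    then show ?thesis using IA IB by (auto simp: top_ereal_def)
  next
    case False
    have step: "c \<le> a + Inf B" if a: "a \<in> A" for a
    proof -
      have "c \<le> (INF b\<in>B. a + b)" using H a by (intro INF_greatest) auto
      also have "\<dots> = a + (INF b\<in>B. b)"
        using False A0 B0 a by (intro INF_ereal_add_right) auto
      finally show ?thesis by simp
    qed
    have "c \<le> (INF a\<in>A. a + Inf B)" using step by (intro INF_greatest) auto
    also have "\<dots> = (INF a\<in>A. a) + Inf B"
      using False A0 IB by (intro INF_ereal_add_left) auto
    finally show ?thesis by simp
  qed
qed

lemma distortion_nonneg:
  assumes "R \<noteq> {}"
  shows "0 \<le> distortion X Y R"
proof -
  obtain x y where "(x, y) \<in> R" using assms by auto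
  then show ?thesis unfolding distortion_def
    by (intro Sup_upper2[of "ereal \<bar>mdist X x x - mdist Y y y\<bar>"]) auto
qed

lemma admissible_nonempty:
  assumes "admissible k X Y R" "mspace X \<noteq> {}"
  shows "R \<noteq> {}"
  using assms unfolding admissible_def is_correspondence_def by auto

lemma distortion_converse_le:
  "distortion Y X (converse R) \<le> distortion X Y R"
  unfolding distortion_def
proof (rule Sup_least)
  fix d assume "d \<in> {ereal \<bar>mdist Y x x' - mdist X y y'\<bar> | x y x' y'. (x, y) \<in> converse R \<and> (x', y') \<in> converse R}"
  then obtain x y x' y' where d: "d = ereal \<bar>mdist Y x x' - mdist X y y'\<bar>" "(y, x) \<in> R" "(y', x') \<in> R"
    by blast
  have "d = ereal \<bar>mdist X y y' - mdist Y x x'\<bar>" using d(1) by (simp add: abs_minus_commute)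
  then have "d \<in> {ereal \<bar>mdist X x x' - mdist Y y y'\<bar> | x y x' y'. (x, y) \<in> R \<and> (x', y') \<in> R}"
    using d(2,3) by blast
  then show "d \<le> Sup {ereal \<bar>mdist X x x' - mdist Y y y'\<bar> | x y x' y'. (x, y) \<in> R \<and> (x', y') \<in> R}"
    by (rule Sup_upper)
qed

lemma distortion_converse:
  "distortion Y X (converse R) = distortion X Y R"
  using distortion_converse_le[of Y X R] distortion_converse_le[of X Y "converse R"]
  by (simp add: antisym)

lemma fst_conv_img: "fst ` converse R = snd ` R"
  by (simp only: fst_eq_Domain snd_eq_Range Domain_converse)

lemma snd_conv_img: "snd ` converse R = fst ` R"
  by (simp only: fst_eq_Domain snd_eq_Range Range_converse)

lemma corr_converse:
  "is_correspondence X Y R \<Longrightarrow> is_correspondence Y X (converse R)"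
  unfolding is_correspondence_def fst_conv_img snd_conv_img by auto

lemma admissible_converse:
  "admissible k X Y R \<Longrightarrow> admissible k Y X (converse R)"
  unfolding admissible_def using corr_converse by (cases k) auto

lemma admissible_Id:
  "admissible k X X (Id_on (mspace X))"
proof -
  have c: "is_correspondence X X (Id_on (mspace X))"
    unfolding is_correspondence_def fst_eq_Domain snd_eq_Range by auto
  have img: "Id_on (mspace X) `` {x} = (if x \<in> mspace X then {x} else {})" for x
    by auto
  have u: "upper_semicont (mtopology_of X) (mtopology_of X) (Id_on (mspace X))"
    unfolding upper_semicont_def
  proof (intro ballI allI impI)
    fix x U assume x: "x \<in> topspace (mtopology_of X)" and U: "openin (mtopology_of X) U \<and> Id_on (mspace X) `` {x} \<subseteq> U"
    then show "\<exists>V. openin (mtopology_of X) V \<and> x \<in> V \<and> (\<forall>x'\<in>V. Id_on (mspace X) `` {x'} \<subseteq> U)"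
      by (intro exI[of _ U]) (auto simp: img)
  qed
  have l: "lower_semicont (mtopology_of X) (mtopology_of X) (Id_on (mspace X))"
    unfolding lower_semicont_def
  proof (intro ballI allI impI)
    fix x U assume x: "x \<in> topspace (mtopology_of X)" and U: "openin (mtopology_of X) U \<and> Id_on (mspace X) `` {x} \<inter> U \<noteq> {}"
    then show "\<exists>V. openin (mtopology_of X) V \<and> x \<in> V \<and> (\<forall>x'\<in>V. Id_on (mspace X) `` {x'} \<inter> U \<noteq> {})"
      apply (intro exI[of _ U])
      apply (auto simp: img split: if_splits)
      using openin_subset apply fastforce+
      done
  qed
  have cv: "converse (Id_on (mspace X)) = Id_on (mspace X)" by auto
  show ?thesis unfolding admissible_def using c u l cv by (cases k) auto
qed

lemma distortion_Id:
  "distortion X X (Id_on (mspace X)) \<le> 0"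
  unfolding distortion_def by (rule Sup_least) auto

lemma usc_comp:
  assumes R: "upper_semicont S T R" and Q: "upper_semicont T W Q"
    and sub: "R \<subseteq> topspace S \<times> topspace T"
  shows "upper_semicont S W (R O Q)"
  unfolding upper_semicont_def
proof (intro ballI allI impI)
  fix x U assume x: "x \<in> topspace S" and U: "openin W U \<and> (R O Q) `` {x} \<subseteq> U"
  have ch: "\<forall>y\<in>R `` {x}. \<exists>Wo. openin T Wo \<and> y \<in> Wo \<and> (\<forall>y'\<in>Wo. Q `` {y'} \<subseteq> U)"
  proof
    fix y assume y: "y \<in> R `` {x}"
    then have "y \<in> topspace T" using sub by auto
    moreover have "Q `` {y} \<subseteq> U" using y U by auto
    ultimately show "\<exists>Wo. openin T Wo \<and> y \<in> Wo \<and> (\<forall>y'\<in>Wo. Q `` {y'} \<subseteq> U)"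
      using Q U unfolding upper_semicont_def by simp
  qed
  obtain Ob where Ob: "\<And>y. y \<in> R `` {x} \<Longrightarrow> openin T (Ob y) \<and> y \<in> Ob y \<and> (\<forall>y'\<in>Ob y. Q `` {y'} \<subseteq> U)"
    using bchoice[OF ch] by blast
  define O' where "O' = \<Union>(Ob ` (R `` {x}))"
  have "openin T O'" unfolding O'_def using Ob by (intro openin_Union) auto
  moreover have "R `` {x} \<subseteq> O'" unfolding O'_def using Ob by blast
  ultimately have "\<exists>V. openin S V \<and> x \<in> V \<and> (\<forall>x'\<in>V. R `` {x'} \<subseteq> O')"
    using R x unfolding upper_semicont_def by simp
  then obtain V where V: "openin S V" "x \<in> V" "\<And>x'. x' \<in> V \<Longrightarrow> R `` {x'} \<subseteq> O'"
    by blast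
  have "(R O Q) `` {x'} \<subseteq> U" if "x' \<in> V" for x'
  proof
    fix z assume "z \<in> (R O Q) `` {x'}"
    then obtain y where y: "(x', y) \<in> R" "(y, z) \<in> Q" by auto
    then have "y \<in> O'" using V that by auto
    then obtain y0 where "y0 \<in> R `` {x}" "y \<in> Ob y0" unfolding O'_def by auto
    then show "z \<in> U" using Ob y by blast
  qed
  then show "\<exists>V. openin S V \<and> x \<in> V \<and> (\<forall>x'\<in>V. (R O Q) `` {x'} \<subseteq> U)"
    using V by blast
qed

lemma lsc_comp:
  assumes R: "lower_semicont S T R" and Q: "lower_semicont T W Q"
    and sub: "R \<subseteq> topspace S \<times> topspace T"
  shows "lower_semicont S W (R O Q)"
  unfolding lower_semicont_def
proof (intro ballI allI impI)
  fix x U assume x: "x \<in> topspace S" and U: "openin W U \<and> (R O Q) `` {x} \<inter> U \<noteq> {}"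
  then obtain y z where yz: "(x, y) \<in> R" "(y, z) \<in> Q" "z \<in> U" by blast
  then have yT: "y \<in> topspace T" using sub by auto
  have "Q `` {y} \<inter> U \<noteq> {}" using yz by blast
  then have "\<exists>Wo. openin T Wo \<and> y \<in> Wo \<and> (\<forall>y'\<in>Wo. Q `` {y'} \<inter> U \<noteq> {})"
    using Q U yT unfolding lower_semicont_def by simp
  then obtain Ob where Ob: "openin T Ob" "y \<in> Ob" "\<And>y'. y' \<in> Ob \<Longrightarrow> Q `` {y'} \<inter> U \<noteq> {}"
    by blast
  have "R `` {x} \<inter> Ob \<noteq> {}" using yz Ob by blast
  then have "\<exists>V. openin S V \<and> x \<in> V \<and> (\<forall>x'\<in>V. R `` {x'} \<inter> Ob \<noteq> {})"
    using R x Ob(1) unfolding lower_semicont_def by simp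
  then obtain V where V: "openin S V" "x \<in> V" "\<And>x'. x' \<in> V \<Longrightarrow> R `` {x'} \<inter> Ob \<noteq> {}"
    by blast
  have "(R O Q) `` {x'} \<inter> U \<noteq> {}" if xV: "x' \<in> V" for x'
  proof -
    obtain y' where y': "(x', y') \<in> R" "y' \<in> Ob" using V(3)[OF xV] by blast
    then obtain z' where "(y', z') \<in> Q" "z' \<in> U" using Ob(3) by blast
    then show ?thesis using y' by blast
  qed
  then show "\<exists>V. openin S V \<and> x \<in> V \<and> (\<forall>x'\<in>V. (R O Q) `` {x'} \<inter> U \<noteq> {})"
    using V by blast
qed

lemma corr_comp:
  assumes "is_correspondence X Y R" "is_correspondence Y Z Q"
  shows "is_correspondence X Z (R O Q)"
proof -
  have a: "R \<subseteq> mspace X \<times> mspace Y" "fst ` R = mspace X" "snd ` R = mspace Y"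
    "Q \<subseteq> mspace Y \<times> mspace Z" "fst ` Q = mspace Y" "snd ` Q = mspace Z"
    using assms unfolding is_correspondence_def by auto
  have "fst ` (R O Q) = mspace X"
  proof
    show "fst ` (R O Q) \<subseteq> mspace X" using a by force
    show "mspace X \<subseteq> fst ` (R O Q)"
    proof
      fix x assume "x \<in> mspace X"
      then obtain y where "(x, y) \<in> R" using a(2) by force
      then have "y \<in> fst ` Q" using a by auto
      then obtain z where "(y, z) \<in> Q" by force
      then show "x \<in> fst ` (R O Q)" using \<open>(x, y) \<in> R\<close> by force
    qed
  qed
  moreover have "snd ` (R O Q) = mspace Z"
  proof
    show "snd ` (R O Q) \<subseteq> mspace Z" using a by force
    show "mspace Z \<subseteq> snd ` (R O Q)"
    proof
      fix z assume "z \<in> mspace Z"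
      then obtain y where "(y, z) \<in> Q" using a(6) by force
      then have "y \<in> snd ` R" using a by auto
      then obtain x where "(x, y) \<in> R" by force
      then show "z \<in> snd ` (R O Q)" using \<open>(y, z) \<in> Q\<close> by force
    qed
  qed
  moreover have "R O Q \<subseteq> mspace X \<times> mspace Z" using a by auto
  ultimately show ?thesis unfolding is_correspondence_def by auto
qed

lemma admissible_comp:
  assumes R: "admissible k X Y R" and Q: "admissible k Y Z Q"
  shows "admissible k X Z (R O Q)"
proof -
  have cR: "is_correspondence X Y R" and cQ: "is_correspondence Y Z Q"
    using R Q unfolding admissible_def by auto
  have s1: "R \<subseteq> topspace (mtopology_of X) \<times> topspace (mtopology_of Y)"
    using cR unfolding is_correspondence_def by auto
  have s2: "converse Q \<subseteq> topspace (mtopology_of Z) \<times> topspace (mtopology_of Y)"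
    using cQ unfolding is_correspondence_def by auto
  have cv: "converse (R O Q) = converse Q O converse R" by (rule converse_relcomp)
  note A = usc_comp[OF _ _ s1] and B = lsc_comp[OF _ _ s1] and C = usc_comp[OF _ _ s2] and D = lsc_comp[OF _ _ s2]
  show ?thesis
    using R Q corr_comp[OF cR cQ] unfolding admissible_def cv
    by (cases k) (simp_all add: A B C D)
qed

lemma distortion_comp:
  assumes cR: "is_correspondence X Y R" and cQ: "is_correspondence Y Z Q"
  shows "distortion X Z (R O Q) \<le> distortion X Y R + distortion Y Z Q"
  unfolding distortion_def
proof (rule Sup_least)
  fix d assume "d \<in> {ereal \<bar>mdist X x x' - mdist Z y y'\<bar> | x y x' y'. (x, y) \<in> R O Q \<and> (x', y') \<in> R O Q}"
  then obtain x z x' z' where d: "d = ereal \<bar>mdist X x x' - mdist Z z z'\<bar>" "(x, z) \<in> R O Q" "(x', z') \<in> R O Q"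
    by blast
  from d(2,3) obtain y y' where yy: "(x, y) \<in> R" "(y, z) \<in> Q" "(x', y') \<in> R" "(y', z') \<in> Q" by auto
  have "d \<le> ereal \<bar>mdist X x x' - mdist Y y y'\<bar> + ereal \<bar>mdist Y y y' - mdist Z z z'\<bar>"
    using d(1) by simp
  also have "\<dots> \<le> Sup {ereal \<bar>mdist X x x' - mdist Y y y'\<bar> | x y x' y'. (x, y) \<in> R \<and> (x', y') \<in> R}
      + Sup {ereal \<bar>mdist Y x x' - mdist Z y y'\<bar> | x y x' y'. (x, y) \<in> Q \<and> (x', y') \<in> Q}"
    using yy by (intro add_mono Sup_upper) blast+
  finally show "d \<le> Sup {ereal \<bar>mdist X x x' - mdist Y y y'\<bar> | x y x' y'. (x, y) \<in> R \<and> (x', y') \<in> R}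
      + Sup {ereal \<bar>mdist Y x x' - mdist Z y y'\<bar> | x y x' y'. (x, y) \<in> Q \<and> (x', y') \<in> Q}" .
qed

lemma Inf_dist_nonneg:
  assumes "mspace X \<noteq> {}"
  shows "0 \<le> Inf {distortion X Y R | R. admissible k X Y R}"
  using assms by (intro Inf_greatest) (auto intro: distortion_nonneg dest: admissible_nonempty)

theorem mainTheorem10:
  fixes k :: GH_kind and X :: "'a metric" and Y :: "'b metric" and Z :: "'c metric"
  assumes "mspace X \<noteq> {}" and "mspace Y \<noteq> {}" and "mspace Z \<noteq> {}"
  shows "0 \<le> dGH k X Y \<and> dGH k X X = 0 \<and> dGH k X Y = dGH k Y X
         \<and> dGH k X Z \<le> dGH k X Y + dGH k Y Z"
proof (intro conjI)
  show "0 \<le> dGH k X Y" unfolding dGH_def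
    by (intro ereal_half_nonneg Inf_dist_nonneg assms)
  have "Inf {distortion X X R | R. admissible k X X R} \<le> 0"
    using admissible_Id[of k X] distortion_Id[of X] by (intro Inf_lower2) auto
  moreover have "0 \<le> Inf {distortion X X R | R. admissible k X X R}"
    using Inf_dist_nonneg[OF assms(1)] .
  ultimately show "dGH k X X = 0" unfolding dGH_def by simp
  have "{distortion X Y R | R. admissible k X Y R} = {distortion Y X R | R. admissible k Y X R}"
  proof (intro set_eqI iffI)
    fix d assume "d \<in> {distortion X Y R | R. admissible k X Y R}"
    then obtain R where "admissible k X Y R" "d = distortion X Y R" by auto
    then have "admissible k Y X (converse R) \<and> d = distortion Y X (converse R)"
      using admissible_converse distortion_converse by metis
    then show "d \<in> {distortion Y X R | R. admissible k Y X R}" by blast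
  next
    fix d assume "d \<in> {distortion Y X R | R. admissible k Y X R}"
    then obtain R where "admissible k Y X R" "d = distortion Y X R" by auto
    then have "admissible k X Y (converse R) \<and> d = distortion X Y (converse R)"
      using admissible_converse distortion_converse by metis
    then show "d \<in> {distortion X Y R | R. admissible k X Y R}" by blast
  qed
  then show "dGH k X Y = dGH k Y X" unfolding dGH_def by simp
  have "Inf {distortion X Z R | R. admissible k X Z R}
      \<le> Inf {distortion X Y R | R. admissible k X Y R} + Inf {distortion Y Z R | R. admissible k Y Z R}"
  proof (rule Inf_add_bound)
    show "\<And>a. a \<in> {distortion X Y R | R. admissible k X Y R} \<Longrightarrow> 0 \<le> a"
      using assms by (auto intro: distortion_nonneg dest: admissible_nonempty)
    show "\<And>a. a \<in> {distortion Y Z R | R. admissible k Y Z R} \<Longrightarrow> 0 \<le> a"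
      using assms by (auto intro: distortion_nonneg dest: admissible_nonempty)
    fix a b assume "a \<in> {distortion X Y R | R. admissible k X Y R}" "b \<in> {distortion Y Z R | R. admissible k Y Z R}"
    then obtain R Q where RQ: "admissible k X Y R" "a = distortion X Y R" "admissible k Y Z Q" "b = distortion Y Z Q"
      by auto
    have "Inf {distortion X Z R | R. admissible k X Z R} \<le> distortion X Z (R O Q)"
      using admissible_comp[OF RQ(1) RQ(3)] by (intro Inf_lower) auto
    also have "\<dots> \<le> a + b" using RQ distortion_comp unfolding admissible_def by blast
    finally show "Inf {distortion X Z R | R. admissible k X Z R} \<le> a + b" .
  qed
  then have "dGH k X Z \<le> (Inf {distortion X Y R | R. admissible k X Y R} + Inf {distortion Y Z R | R. admissible k Y Z R}) / 2"
    unfolding dGH_def by (rule ereal_half_mono)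
  also have "\<dots> = dGH k X Y + dGH k Y Z"
    unfolding dGH_def using Inf_dist_nonneg[OF assms(1)] Inf_dist_nonneg[OF assms(2)] by (intro ereal_half_add) auto
  finally show "dGH k X Z \<le> dGH k X Y + dGH k Y Z" .
qed

end
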